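(* Assume that $I\subset J\hat{J}$. Then the natural reduction homomorphism $\pi_I:\Gamma(J,\hat{J})\to\overline{\Gamma}_I(J,\hat{J})$ is surjective.
   Context: $F$ is a totally real number field with ring of integers $R$; $J,\hat J\subset F$ are fractional ideals with $J\hat J\subset R$, and $I\subset R$ is a non-zero ideal. $\Gamma(J,\hat J)$ is the group of matrices $\begin{pmatrix} a_{11} & a_{12}\\ a_{21} & a_{22}\end{pmatrix}\in\operatorname{SL}_2(F)$ with $a_{11},a_{22}\in R$, $a_{12}\in J$, $a_{21}\in\hat J$. $\overline{\Gamma}_I(J,\hat J)$ is the group of matrices $\begin{pmatrix} \bar a_{11} & \bar a_{12}\\ \bar a_{21} & \bar a_{22}\end{pmatrix}$ with $\bar a_{11},\bar a_{22}\in R/I$, $\bar a_{12}\in J/IJ$, $\bar a_{21}\in\hat J/I\hat J$ and $\bar a_{11}\bar a_{22}-\bar a_{12}\bar a_{21}=1$ (using the map $J/IJ\otimes\hat J/I\hat J\to R/I$ induced by multiplication). *)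

theory Defs
  imports Complex_Main "HOL-Computational_Algebra.Polynomial"
begin

definition number_field :: "'a::field_char_0 itself \<Rightarrow> bool" where
  "number_field _ \<longleftrightarrow>
     (\<exists>B::'a list. \<forall>x::'a. \<exists>c::nat \<Rightarrow> rat. x = (\<Sum>i<length B. of_rat (c i) * B ! i))"

definition totally_real :: "'a::field_char_0 itself \<Rightarrow> bool" where
  "totally_real _ \<longleftrightarrow>
     (\<forall>\<sigma>::'a \<Rightarrow> complex.
        (\<sigma> 1 = 1 \<and> (\<forall>x y. \<sigma> (x + y) = \<sigma> x + \<sigma> y) \<and> (\<forall>x y. \<sigma> (x * y) = \<sigma> x * \<sigma> y))
        \<longrightarrow> (\<forall>x. \<sigma> x \<in> \<real>))"

definition ring_of_integers :: "'a::field_char_0 set" where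
  "ring_of_integers = {x. \<exists>p::int poly. lead_coeff p = 1 \<and> poly (map_poly of_int p) x = 0}"

definition ideal_prod :: "'a::field set \<Rightarrow> 'a set \<Rightarrow> 'a set" where
  "ideal_prod A B = {x. \<exists>(n::nat) a b. (\<forall>i<n. a i \<in> A \<and> b i \<in> B) \<and> x = (\<Sum>i<n. a i * b i)}"

definition frac_ideal :: "'a::field_char_0 set \<Rightarrow> bool" where
  "frac_ideal J \<longleftrightarrow> 0 \<in> J \<and> (\<forall>x\<in>J. \<forall>y\<in>J. x + y \<in> J)
     \<and> (\<forall>r\<in>ring_of_integers. \<forall>x\<in>J. r * x \<in> J)
     \<and> (\<exists>d\<in>ring_of_integers. d \<noteq> 0 \<and> (\<forall>x\<in>J. d * x \<in> ring_of_integers))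
     \<and> J \<noteq> {0}"

definition nz_ideal :: "'a::field_char_0 set \<Rightarrow> bool" where
  "nz_ideal I \<longleftrightarrow> I \<subseteq> ring_of_integers \<and> 0 \<in> I \<and> (\<forall>x\<in>I. \<forall>y\<in>I. x + y \<in> I)
     \<and> (\<forall>r\<in>ring_of_integers. \<forall>x\<in>I. r * x \<in> I) \<and> I \<noteq> {0}"

text \<open>Matrices (a11, a12, a21, a22).\<close>
type_synonym 'a mat2 = "'a \<times> 'a \<times> 'a \<times> 'a"

definition Gamma :: "'a::field_char_0 set \<Rightarrow> 'a set \<Rightarrow> 'a mat2 set" where
  "Gamma J Jh = {(a11, a12, a21, a22). a11 \<in> ring_of_integers \<and> a22 \<in> ring_of_integers
      \<and> a12 \<in> J \<and> a21 \<in> Jh \<and> a11 * a22 - a12 * a21 = 1}"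

text \<open>Representatives of elements of Gamma-bar_I(J,Jh): entries in R, J, Jh, R whose
  classes in R/I, J/IJ, Jh/IJh, R/I satisfy the determinant condition mod I.\<close>
definition Gammabar_reps :: "'a::field_char_0 set \<Rightarrow> 'a set \<Rightarrow> 'a set \<Rightarrow> 'a mat2 set" where
  "Gammabar_reps I J Jh = {(b11, b12, b21, b22). b11 \<in> ring_of_integers \<and> b22 \<in> ring_of_integers
      \<and> b12 \<in> J \<and> b21 \<in> Jh \<and> b11 * b22 - b12 * b21 - 1 \<in> I}"

text \<open>Two representatives define the same element of Gamma-bar_I(J,Jh).\<close>
definition red_eq :: "'a::field_char_0 set \<Rightarrow> 'a set \<Rightarrow> 'a set \<Rightarrow> 'a mat2 \<Rightarrow> 'a mat2 \<Rightarrow> bool" where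
  "red_eq I J Jh A B \<longleftrightarrow> (case A of (a11, a12, a21, a22) \<Rightarrow> case B of (b11, b12, b21, b22) \<Rightarrow>
      a11 - b11 \<in> I \<and> a12 - b12 \<in> ideal_prod I J \<and> a21 - b21 \<in> ideal_prod I Jh \<and> a22 - b22 \<in> I)"

end

theory Submission
  imports Defs "Jordan_Normal_Form.Char_Poly"
begin

lemma det_trick:
  fixes x :: "'a::field_char_0" and ws :: "'a list"
  assumes gen: "\<forall>i<length ws. \<exists>c::nat\<Rightarrow>int. x * ws!i = (\<Sum>k<length ws. of_int (c k) * ws!k)"
    and nz: "\<exists>i<length ws. ws!i \<noteq> 0"
  shows "x \<in> ring_of_integers"
proof -
  define n where "n = length ws"
  have "\<forall>i. \<exists>c::nat\<Rightarrow>int. i<n \<longrightarrow> x * ws!i = (\<Sum>k<n. of_int (c k) * ws!k)"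
    using gen unfolding n_def by blast
  from choice[OF this] obtain C where C: "\<forall>i<n. x * ws!i = (\<Sum>k<n. of_int (C i k) * ws!k)"
    by blast
  define A :: "int mat" where "A = mat n n (\<lambda>(i,k). C i k)"
  define A' :: "'a mat" where "A' = map_mat of_int A"
  define v where "v = vec_of_list ws"
  have A: "A \<in> carrier_mat n n" unfolding A_def by simp
  have A': "A' \<in> carrier_mat n n" unfolding A'_def using A by simp
  have dv: "dim_vec v = n" unfolding v_def n_def by simp
  have drA: "dim_row A' = n" using A' by (rule carrier_matD)
  have dcA: "dim_col A' = n" using A' by (rule carrier_matD)
  have vi: "\<And>i. v $ i = ws ! i" unfolding v_def by (rule vec_of_list_index)
  have "A' *\<^sub>v v = x \<cdot>\<^sub>v v"
  proof (rule eq_vecI)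
    fix i assume "i < dim_vec (x \<cdot>\<^sub>v v)"
    then have i: "i < n" using dv by simp
    have "(A' *\<^sub>v v) $ i = row A' i \<bullet> v" using i A' by simp
    also have "\<dots> = (\<Sum>k\<in>{0..<n}. row A' i $ k * v $ k)" unfolding scalar_prod_def dv ..
    also have "\<dots> = (\<Sum>k<n. of_int (C i k) * ws!k)" unfolding atLeast0LessThan
    proof (rule sum.cong)
      fix k assume "k \<in> {..<n}"
      then have k: "k < n" by simp
      have "row A' i $ k = A' $$ (i,k)" using i k A' by (simp add: drA)
      also have "\<dots> = of_int (C i k)" using i k unfolding A'_def A_def by simp
      finally show "row A' i $ k * v $ k = of_int (C i k) * ws!k" using vi by simp
    qed simp
    also have "\<dots> = x * ws!i" using C i by simp
    finally show "(A' *\<^sub>v v) $ i = (x \<cdot>\<^sub>v v) $ i" using i dv vi by simp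
  qed (use dv A' in auto)
  moreover have "v \<in> carrier_vec (dim_row A')" unfolding drA by (rule carrier_vecI[OF dv])
  moreover have "v \<noteq> 0\<^sub>v (dim_row A')"
  proof
    assume "v = 0\<^sub>v (dim_row A')"
    then have "\<forall>i<n. v $ i = 0" using A' by auto
    then have "\<forall>i<n. ws!i = 0" using vi by simp
    then show False using nz n_def by auto
  qed
  ultimately have "eigenvalue A' x" unfolding eigenvalue_def eigenvector_def by blast
  then have "poly (char_poly A') x = 0" using eigenvalue_root_char_poly[OF A'] by simp
  moreover have "char_poly A' = map_poly of_int (char_poly A)"
    unfolding A'_def by (rule of_int_hom.char_poly_hom[OF A])
  moreover have "lead_coeff (char_poly A) = 1" using degree_monic_char_poly[OF A] by simp
  ultimately show ?thesis unfolding ring_of_integers_def by (metis (mono_tags, lifting) mem_Collect_eq)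
qed


definition zspan :: "'a::field_char_0 list \<Rightarrow> 'a set" where
  "zspan ws = {s. \<exists>c::nat\<Rightarrow>int. s = (\<Sum>k<length ws. of_int (c k) * ws!k)}"

lemma zspan_0: "0 \<in> zspan ws"
  unfolding zspan_def by (rule CollectI, rule exI[of _ "\<lambda>_. 0"]) simp

lemma zspan_add: "a \<in> zspan ws \<Longrightarrow> b \<in> zspan ws \<Longrightarrow> a + b \<in> zspan ws"
  unfolding zspan_def
proof (clarify)
  fix c d :: "nat \<Rightarrow> int"
  show "\<exists>e::nat\<Rightarrow>int. (\<Sum>k<length ws. of_int (c k) * ws!k) + (\<Sum>k<length ws. of_int (d k) * ws!k)
     = (\<Sum>k<length ws. of_int (e k) * ws!k)"
    by (rule exI[of _ "\<lambda>k. c k + d k"]) (simp add: sum.distrib distrib_right)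
qed

lemma zspan_smult: "a \<in> zspan ws \<Longrightarrow> of_int z * a \<in> zspan ws"
  unfolding zspan_def
proof (clarify)
  fix c :: "nat \<Rightarrow> int"
  show "\<exists>e::nat\<Rightarrow>int. of_int z * (\<Sum>k<length ws. of_int (c k) * ws!k)
     = (\<Sum>k<length ws. of_int (e k) * ws!k)"
    by (rule exI[of _ "\<lambda>k. z * c k"]) (simp add: sum_distrib_left mult.assoc)
qed

lemma zspan_sum: "finite A \<Longrightarrow> (\<And>a. a \<in> A \<Longrightarrow> f a \<in> zspan ws) \<Longrightarrow> sum f A \<in> zspan ws"
  by (induction A rule: finite_induct) (auto intro: zspan_0 zspan_add)

lemma zspan_gen: "i < length ws \<Longrightarrow> ws!i \<in> zspan ws"
  unfolding zspan_def
proof (rule CollectI, rule exI[of _ "\<lambda>k. if k = i then 1 else 0"])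
  assume i: "i < length ws"
  have "(\<Sum>k<length ws. of_int (if k = i then 1 else 0) * ws!k) = (\<Sum>k<length ws. if k = i then ws!k else 0)"
    by (rule sum.cong) auto
  also have "\<dots> = ws!i" using i by (simp add: sum.delta)
  finally show "ws!i = (\<Sum>k<length ws. of_int (if k = i then 1 else 0) * ws!k)" by simp
qed

lemma zspan_set: "w \<in> set ws \<Longrightarrow> w \<in> zspan ws"
  by (metis in_set_conv_nth zspan_gen)

lemma zspan_mult_closed:
  assumes "\<forall>w\<in>set ws. y * w \<in> zspan ws" and "s \<in> zspan ws"
  shows "y * s \<in> zspan ws"
proof -
  from assms(2) obtain c where s: "s = (\<Sum>k<length ws. of_int (c k) * ws!k)" unfolding zspan_def by blast
  have "y * s = (\<Sum>k<length ws. of_int (c k) * (y * ws!k))" unfolding s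
    by (simp add: sum_distrib_left algebra_simps)
  also have "\<dots> \<in> zspan ws"
    by (rule zspan_sum) (auto intro!: zspan_smult assms(1)[rule_format] nth_mem)
  finally show ?thesis .
qed

lemma det_trick_zspan:
  fixes x :: "'a::field_char_0"
  assumes "\<forall>w\<in>set ws. x * w \<in> zspan ws" and "1 \<in> set ws"
  shows "x \<in> ring_of_integers"
proof (rule det_trick)
  show "\<forall>i<length ws. \<exists>c::nat\<Rightarrow>int. x * ws!i = (\<Sum>k<length ws. of_int (c k) * ws!k)"
    using assms(1) nth_mem unfolding zspan_def by blast
  show "\<exists>i<length ws. ws!i \<noteq> 0" using assms(2) by (metis in_set_conv_nth one_neq_zero)
qed

lemma int_root_powers:
  fixes x :: "'a::field_char_0"
  assumes "x \<in> ring_of_integers"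
  obtains n where "n \<ge> 1" "\<And>k. x^k \<in> zspan (map (\<lambda>i. x^i) [0..<n])"
proof -
  from assms obtain p :: "int poly" where p1: "lead_coeff p = 1" and p0: "poly (map_poly of_int p) x = 0"
    unfolding ring_of_integers_def by blast
  define n where "n = degree p"
  define ws where "ws = map (\<lambda>i. x^i) [0..<n]"
  have dm: "degree (map_poly (of_int :: int \<Rightarrow> 'a) p) = n" unfolding n_def by simp
  have "0 = poly (map_poly of_int p) x" using p0 by simp
  also have "\<dots> = (\<Sum>i\<le>n. of_int (coeff p i) * x^i)" unfolding poly_altdef dm by simp
  also have "\<dots> = (\<Sum>i<n. of_int (coeff p i) * x^i) + x^n"
    using p1 unfolding n_def by (simp add: lessThan_Suc_atMost[symmetric])
  finally have xn: "x^n = - (\<Sum>i<n. of_int (coeff p i) * x^i)" by (simp add: eq_neg_iff_add_eq_0 add.commute)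
  have n1: "n \<ge> 1"
  proof (rule ccontr)
    assume "\<not> n \<ge> 1" then have "n = 0" by simp
    then show False using xn by simp
  qed
  have lw: "length ws = n" unfolding ws_def by simp
  have gen: "i < n \<Longrightarrow> x^i \<in> zspan ws" for i
    using zspan_gen[of i ws] unfolding lw by (simp add: ws_def)
  have xn_in: "x^n \<in> zspan ws"
  proof -
    have "(\<Sum>i<n. of_int (coeff p i) * x^i) \<in> zspan ws"
      by (rule zspan_sum) (auto intro!: zspan_smult gen)
    then have "of_int (-1) * (\<Sum>i<n. of_int (coeff p i) * x^i) \<in> zspan ws" by (rule zspan_smult)
    then show ?thesis using xn by simp
  qed
  have cl: "\<forall>w\<in>set ws. x * w \<in> zspan ws"
  proof
    fix w assume "w \<in> set ws"
    then obtain i where i: "i < n" "w = x^i" unfolding ws_def by auto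
    show "x * w \<in> zspan ws"
    proof (cases "Suc i < n")
      case True then show ?thesis using gen[of "Suc i"] i by simp
    next
      case False then have "Suc i = n" using i by simp
      then show ?thesis using xn_in i by (metis power_Suc)
    qed
  qed
  have "x^k \<in> zspan ws" for k
  proof (induction k)
    case 0 then show ?case using gen[of 0] n1 by simp
  next
    case (Suc k) then show ?case using zspan_mult_closed[OF cl Suc] by simp
  qed
  then show ?thesis using that n1 unfolding ws_def by blast
qed


lemma zspan_elem:
  assumes "s \<in> zspan (map (\<lambda>i. x^i) [0..<n])"
  obtains c :: "nat \<Rightarrow> int" where "s = (\<Sum>i<n. of_int (c i) * x^i)"
  using assms unfolding zspan_def by auto

lemma R_closed:
  fixes x y :: "'a::field_char_0"
  assumes x: "x \<in> ring_of_integers" and y: "y \<in> ring_of_integers"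
  shows "x + y \<in> ring_of_integers" "x * y \<in> ring_of_integers"
proof -
  obtain n where n1: "n \<ge> 1" and xp: "\<And>k. x^k \<in> zspan (map (\<lambda>i. x^i) [0..<n])"
    using int_root_powers[OF x] by blast
  obtain m where m1: "m \<ge> 1" and yp: "\<And>k. y^k \<in> zspan (map (\<lambda>i. y^i) [0..<m])"
    using int_root_powers[OF y] by blast
  define ws where "ws = concat (map (\<lambda>i. map (\<lambda>j. x^i*y^j) [0..<m]) [0..<n])"
  have mem: "i < n \<Longrightarrow> j < m \<Longrightarrow> x^i*y^j \<in> set ws" for i j
    unfolding ws_def by (auto intro!: bexI[of _ i])
  have all: "x^k*y^l \<in> zspan ws" for k l
  proof -
    obtain c where c: "x^k = (\<Sum>i<n. of_int (c i) * x^i)" using zspan_elem[OF xp[of k]] by blast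
    obtain d where d: "y^l = (\<Sum>j<m. of_int (d j) * y^j)" using zspan_elem[OF yp[of l]] by blast
    have "x^k*y^l = (\<Sum>i<n. \<Sum>j<m. of_int (c i) * x^i * (of_int (d j) * y^j))"
      unfolding c d by (rule sum_product)
    also have "\<dots> = (\<Sum>i<n. \<Sum>j<m. of_int (c i * d j) * (x^i * y^j))"
      by (simp add: algebra_simps)
    also have "\<dots> \<in> zspan ws"
      by (intro zspan_sum zspan_smult zspan_set mem finite_lessThan) auto
    finally show ?thesis .
  qed
  have one: "1 \<in> set ws" using mem[of 0 0] n1 m1 by simp
  have ws_form: "w \<in> set ws \<Longrightarrow> \<exists>i j. w = x^i*y^j" for w unfolding ws_def by auto
  show "x + y \<in> ring_of_integers"
  proof (rule det_trick_zspan[OF _ one], rule ballI)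
    fix w assume "w \<in> set ws"
    then obtain i j where w: "w = x^i*y^j" using ws_form by blast
    have "(x + y) * w = x^(Suc i)*y^j + x^i*y^(Suc j)" unfolding w by (simp add: algebra_simps)
    then show "(x + y) * w \<in> zspan ws" using all zspan_add by metis
  qed
  show "x * y \<in> ring_of_integers"
  proof (rule det_trick_zspan[OF _ one], rule ballI)
    fix w assume "w \<in> set ws"
    then obtain i j where w: "w = x^i*y^j" using ws_form by blast
    have "(x * y) * w = x^(Suc i)*y^(Suc j)" unfolding w by (simp add: algebra_simps)
    then show "(x * y) * w \<in> zspan ws" using all by metis
  qed
qed

lemma R_of_int: "(of_int z :: 'a::field_char_0) \<in> ring_of_integers"
  unfolding ring_of_integers_def
  by (rule CollectI, rule exI[of _ "[:-z, 1:]"]) simp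

lemma R_0: "0 \<in> ring_of_integers" and R_1: "1 \<in> ring_of_integers"
  using R_of_int[of 0] R_of_int[of 1] by simp_all

lemma R_neg: "x \<in> ring_of_integers \<Longrightarrow> - x \<in> ring_of_integers"
  using R_closed(2)[OF R_of_int[of "-1"]] by simp

lemma R_diff: "x \<in> ring_of_integers \<Longrightarrow> y \<in> ring_of_integers \<Longrightarrow> x - y \<in> ring_of_integers"
  using R_closed(1)[OF _ R_neg] by simp

lemma R_pow: "x \<in> ring_of_integers \<Longrightarrow> x ^ n \<in> ring_of_integers"
  by (induction n) (auto intro: R_closed R_1)


definition Rideal :: "'a::field_char_0 set \<Rightarrow> bool" where
  "Rideal K \<longleftrightarrow> K \<subseteq> ring_of_integers \<and> (\<forall>a\<in>K. \<forall>b\<in>K. a + b \<in> K)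
     \<and> (\<forall>r\<in>ring_of_integers. \<forall>a\<in>K. r * a \<in> K)"

lemma Rideal_sub: "Rideal K \<Longrightarrow> a \<in> K \<Longrightarrow> a \<in> ring_of_integers"
  unfolding Rideal_def by blast
lemma Rideal_add: "Rideal K \<Longrightarrow> a \<in> K \<Longrightarrow> b \<in> K \<Longrightarrow> a + b \<in> K"
  unfolding Rideal_def by blast
lemma Rideal_mult: "Rideal K \<Longrightarrow> r \<in> ring_of_integers \<Longrightarrow> a \<in> K \<Longrightarrow> r * a \<in> K"
  unfolding Rideal_def by blast
lemma Rideal_mult2: "Rideal K \<Longrightarrow> r \<in> ring_of_integers \<Longrightarrow> a \<in> K \<Longrightarrow> a * r \<in> K"
  unfolding Rideal_def by (metis mult.commute)
lemma Rideal_0: "Rideal K \<Longrightarrow> a \<in> K \<Longrightarrow> 0 \<in> K"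
  using Rideal_mult[OF _ R_0] by fastforce
lemma Rideal_neg: "Rideal K \<Longrightarrow> a \<in> K \<Longrightarrow> - a \<in> K"
  using Rideal_mult[OF _ R_of_int[of "-1"]] by fastforce
lemma Rideal_diff: "Rideal K \<Longrightarrow> a \<in> K \<Longrightarrow> b \<in> K \<Longrightarrow> a - b \<in> K"
  using Rideal_add[OF _ _ Rideal_neg] by fastforce
lemma Rideal_sum: assumes "Rideal K" "z \<in> K"
  shows "finite A \<Longrightarrow> (\<And>i. i \<in> A \<Longrightarrow> f i \<in> K) \<Longrightarrow> sum f A \<in> K"
  by (induction A rule: finite_induct) (auto intro: Rideal_0[OF assms] Rideal_add[OF assms(1)])
lemma Rideal_pow: "Rideal K \<Longrightarrow> z \<in> K \<Longrightarrow> z ^ Suc i \<in> K"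
  by (induction i) (auto intro: Rideal_mult Rideal_sub)

lemma Rideal_int:
  assumes K: "Rideal K" and z: "z \<in> K" "z \<noteq> 0"
  shows "\<exists>N::int. N \<noteq> 0 \<and> of_int N \<in> K"
proof -
  have zR: "z \<in> ring_of_integers" using Rideal_sub[OF K z(1)] .
  from zR obtain p :: "int poly" where p1: "lead_coeff p = 1" and p0: "poly (map_poly of_int p) z = 0"
    unfolding ring_of_integers_def by blast
  have "p \<noteq> 0" using p1 by auto
  from order_decomp[OF this, of 0] obtain q where pq: "p = [:0, 1:] ^ order 0 p * q"
    and nd: "\<not> [:0, 1:] dvd q" by auto
  have q0: "coeff q 0 \<noteq> 0" using nd poly_eq_0_iff_dvd[of q 0] by (simp add: poly_0_coeff_0)
  have "poly (map_poly of_int p) z = z ^ order 0 p * poly (map_poly of_int q) z"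
  proof -
    interpret mh: map_poly_comm_ring_hom "of_int :: int \<Rightarrow> 'a" ..
    show ?thesis by (subst pq) (simp add: hom_distribs)
  qed
  then have qz: "poly (map_poly (of_int :: int \<Rightarrow> 'a) q) z = 0" using p0 z(2) by simp
  define d where "d = degree q"
  have "poly (map_poly (of_int :: int \<Rightarrow> 'a) q) z = (\<Sum>i\<le>d. of_int (coeff q i) * z^i)"
    unfolding poly_altdef d_def by simp
  also have "\<dots> = of_int (coeff q 0) + (\<Sum>i<d. of_int (coeff q (Suc i)) * z^(Suc i))"
    by (subst sum.atMost_shift) simp
  finally have eq: "of_int (coeff q 0) = - (\<Sum>i<d. of_int (coeff q (Suc i)) * z^(Suc i))"
    using qz by (simp add: eq_neg_iff_add_eq_0)
  have "(\<Sum>i<d. of_int (coeff q (Suc i)) * z^(Suc i)) \<in> K"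
    by (rule Rideal_sum[OF K z(1)]) (metis finite_lessThan, metis Rideal_mult[OF K R_of_int] Rideal_pow[OF K z(1)])
  then have "of_int (coeff q 0) \<in> K" using eq Rideal_neg[OF K] by metis
  then show ?thesis using q0 by blast
qed


lemma period_to_idem:
  assumes K: "Rideal K" and x: "x \<in> ring_of_integers" and k: "k \<ge> 1" and p: "p \<ge> 1"
    and per: "x^(k+p) - x^k \<in> K"
  shows "\<exists>m\<ge>1. x^(2*m) - x^m \<in> K"
proof -
  have step: "x^(j+p) - x^j \<in> K" if "j \<ge> k" for j
  proof -
    have "x^(j+p) - x^j = x^(j-k) * (x^(k+p) - x^k)" using that
      by (simp add: algebra_simps flip: power_add)
    then show ?thesis using Rideal_mult[OF K R_pow[OF x] per] by simp
  qed
  have multi: "x^(j+q*p) - x^j \<in> K" if "j \<ge> k" for j q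
  proof (induction q)
    case 0 then show ?case using Rideal_0[OF K per] by simp
  next
    case (Suc q)
    have "x^(j+Suc q*p) - x^j = (x^((j+q*p)+p) - x^(j+q*p)) + (x^(j+q*p) - x^j)"
      by (simp add: algebra_simps)
    moreover have "x^((j+q*p)+p) - x^(j+q*p) \<in> K" using step[of "j+q*p"] that by simp
    ultimately show ?case using Rideal_add[OF K _ Suc] by (metis diff_add_cancel)
  qed
  have "x^(k*p + k*p) - x^(k*p) \<in> K" using multi[of "k*p" k] k p
    by (simp add: mult.commute)
  then have "x^(2*(k*p)) - x^(k*p) \<in> K" by (simp add: mult_2)
  moreover have "k*p \<ge> 1" using k p by simp
  ultimately show ?thesis by blast
qed

lemma Rideal_power_idem:
  assumes K: "Rideal K" and z: "z \<in> K" "z \<noteq> 0" and x: "x \<in> ring_of_integers"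
  shows "\<exists>m\<ge>1. x^(2*m) - x^m \<in> K"
proof -
  obtain N :: int where N0: "N \<noteq> 0" and NK: "of_int N \<in> K" using Rideal_int[OF K z] by blast
  obtain n where n1: "n \<ge> 1" and xp: "\<And>k. x^k \<in> zspan (map (\<lambda>i. x^i) [0..<n])"
    using int_root_powers[OF x] by blast
  have "\<forall>k. \<exists>c::nat\<Rightarrow>int. x^k = (\<Sum>i<n. of_int (c i) * x^i)"
    using zspan_elem[OF xp] by metis
  from choice[OF this] obtain C where C: "\<And>k. x^k = (\<Sum>i<n. of_int (C k i) * x^i)" by blast
  define M where "M = \<bar>N\<bar>"
  have M0: "M > 0" using N0 unfolding M_def by simp
  define g where "g k = map (\<lambda>i. C (Suc k) i mod M) [0..<n]" for k
  have "range g \<subseteq> {xs. set xs \<subseteq> {0..<M} \<and> length xs = n}"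
    unfolding g_def using M0 by (auto simp: pos_mod_bound pos_mod_sign)
  then have fin: "finite (range g)" by (rule finite_subset) (rule finite_lists_length_eq, simp)
  have "\<not> inj g"
  proof
    assume "inj g"
    then have "finite (UNIV :: nat set)" using finite_imageD[OF fin] by blast
    then show False by simp
  qed
  then obtain a b where ab: "a \<noteq> b" "g a = g b" unfolding inj_def by blast
  then obtain a b where ab: "a < b" "g a = g b" by (metis linorder_neq_iff)
  have dv: "N dvd (C (Suc b) i - C (Suc a) i)" if "i < n" for i
  proof -
    have "g a ! i = g b ! i" using ab by simp
    then have "C (Suc a) i mod M = C (Suc b) i mod M" using that unfolding g_def by simp
    then have "M dvd (C (Suc b) i - C (Suc a) i)" by (metis mod_eq_dvd_iff)
    then show ?thesis unfolding M_def by simp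
  qed
  define t where "t i = (C (Suc b) i - C (Suc a) i) div N" for i
  have tN: "C (Suc b) i - C (Suc a) i = N * t i" if "i < n" for i
    unfolding t_def using dv[OF that] by simp
  have "x^(Suc b) - x^(Suc a) = (\<Sum>i<n. of_int (C (Suc b) i - C (Suc a) i) * x^i)"
    using C[of "Suc b"] C[of "Suc a"] by (simp add: sum_subtractf algebra_simps)
  also have "\<dots> = (\<Sum>i<n. of_int (t i) * (of_int N * x^i))"
    by (rule sum.cong) (auto simp: tN)
  also have "\<dots> \<in> K"
    by (rule Rideal_sum[OF K z(1)]) (simp, metis Rideal_mult[OF K R_of_int] Rideal_mult2[OF K R_pow[OF x] NK])
  finally have "x^(Suc a + (b - a)) - x^(Suc a) \<in> K" using ab by simp
  then show ?thesis using period_to_idem[OF K x, of "Suc a" "b - a"] ab by simp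
qed


lemma R_sum: "finite A \<Longrightarrow> (\<And>i. i \<in> A \<Longrightarrow> f i \<in> ring_of_integers) \<Longrightarrow> sum f A \<in> ring_of_integers"
  by (induction A rule: finite_induct) (auto intro: R_0 R_closed)

lemmas R_intros = R_closed R_diff R_neg R_pow R_0 R_1 R_of_int

lemma stable_range:
  assumes K: "Rideal K" and z: "z \<in> K" "z \<noteq> 0"
    and a: "a \<in> ring_of_integers" and b: "b \<in> ring_of_integers" and y: "y \<in> ring_of_integers"
    and d: "a*b + y - 1 \<in> K"
  shows "\<exists>t\<in>ring_of_integers. \<exists>u\<in>ring_of_integers. (a + t*y)*u - 1 \<in> K"
proof -
  obtain m where m1: "m \<ge> 1" and em: "a^(2*m) - a^m \<in> K" using Rideal_power_idem[OF K z a] by blast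
  define e where "e = a^m"
  define f where "f = 1 - e"
  define w where "w = a^(m-1)"
  define n where "n = f*a*(1-b)"
  define g where "g = (\<Sum>i<m. (-n)^i)"
  define P where "P = (-n)^m"
  define \<delta> where "\<delta> = a*b + y - 1"
  define u where "u = w*e + f*g"
  have eR: "e \<in> ring_of_integers" unfolding e_def using a by (intro R_intros)
  have fR: "f \<in> ring_of_integers" unfolding f_def using eR by (intro R_intros)
  have wR: "w \<in> ring_of_integers" unfolding w_def using a by (intro R_intros)
  have nR: "n \<in> ring_of_integers" unfolding n_def using fR a b by (intro R_intros)
  have gR: "g \<in> ring_of_integers" unfolding g_def using nR by (intro R_sum R_intros) auto
  have uR: "u \<in> ring_of_integers" unfolding u_def using wR eR fR gR by (intro R_intros)
  have dK: "\<delta> \<in> K" using d unfolding \<delta>_def .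
  have aw: "a*w = e" unfolding w_def e_def using m1 by (simp flip: power_Suc)
  have e2: "e*e - e \<in> K" using em unfolding e_def by (simp add: mult_2 power_add)
  have ef: "e*f \<in> K"
  proof -
    have "e*f = (-1) * (e*e - e)" unfolding f_def by (simp add: algebra_simps)
    then show ?thesis using Rideal_mult[OF K R_of_int[of "-1"] e2] by simp
  qed
  have f2: "f*f - f \<in> K"
  proof -
    have "f*f - f = e*e - e" unfolding f_def by (simp add: algebra_simps)
    then show ?thesis using e2 by simp
  qed
  have fpow: "f^Suc j - f \<in> K" for j
  proof (induction j)
    case 0 then show ?case using Rideal_0[OF K z(1)] by simp
  next
    case (Suc j)
    have "f^Suc (Suc j) - f = f*(f^Suc j - f) + (f*f - f)" by (simp add: algebra_simps)
    then show ?case using Rideal_add[OF K Rideal_mult[OF K fR Suc] f2] by (simp only:)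
  qed
  have nm: "n^m \<in> K"
  proof -
    have fm: "f^m - f \<in> K" using fpow[of "m-1"] m1 by simp
    have "n^m = f^m * a^m * (1-b)^m" unfolding n_def by (simp only: power_mult_distrib)
    also have "\<dots> = ((f^m - f)*e + e*f) * (1-b)^m" unfolding e_def by (simp add: algebra_simps)
    finally have "n^m = ((f^m - f)*e + e*f) * (1-b)^m" .
    moreover have "(f^m - f)*e + e*f \<in> K" using Rideal_add[OF K Rideal_mult2[OF K eR fm] ef] .
    moreover have "(1-b)^m \<in> ring_of_integers" using b by (intro R_intros)
    ultimately show ?thesis using Rideal_mult2[OF K] by metis
  qed
  have PK: "P \<in> K"
  proof -
    have "P = (-1)^m * n^m" unfolding P_def by (simp add: power_mult_distrib[symmetric])
    then show ?thesis using Rideal_mult[OF K _ nm] by (simp add: R_intros)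
  qed
  have geo: "(1 + n) * g = 1 - P"
  proof -
    have "1 - (-n)^m = (1 - (-n)) * (\<Sum>i<m. (-n)^i)" by (rule one_diff_power_eq)
    then show ?thesis unfolding g_def P_def by simp
  qed
  have ident: "(a + f*y)*u - 1 = (a*w*e - e) + (e*f)*((1-a*b)*w) + \<delta>*(f*u) + (f*f - f)*((1-a*b)*g)
      + (e*f)*(a*(1-b)*g) + P*(-f) + f*((1+n)*g - (1 - P))"
    unfolding u_def n_def \<delta>_def f_def by (simp add: algebra_simps)
  have "(a + f*y)*u - 1 \<in> K"
  proof -
    have t1: "a*w*e - e \<in> K" using e2 aw by simp
    have t2: "(e*f)*((1-a*b)*w) \<in> K" using a b wR by (intro Rideal_mult2[OF K _ ef] R_intros)
    have t3: "\<delta>*(f*u) \<in> K" using fR uR by (intro Rideal_mult2[OF K _ dK] R_intros)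
    have t4: "(f*f - f)*((1-a*b)*g) \<in> K" using a b gR by (intro Rideal_mult2[OF K _ f2] R_intros)
    have t5: "(e*f)*(a*(1-b)*g) \<in> K" using a b gR by (intro Rideal_mult2[OF K _ ef] R_intros)
    have t6: "P*(-f) \<in> K" using fR by (intro Rideal_mult2[OF K _ PK] R_intros)
    have t7: "f*((1+n)*g - (1 - P)) = 0" using geo by simp
    show ?thesis unfolding ident t7
      by (intro Rideal_add[OF K] t1 t2 t3 t4 t5 t6 Rideal_0[OF K z(1)])
  qed
  then show ?thesis using fR uR by blast
qed


lemma ip_single: "a \<in> A \<Longrightarrow> b \<in> B \<Longrightarrow> a * b \<in> ideal_prod A B"
  unfolding ideal_prod_def
  by (rule CollectI, rule exI[of _ 1], rule exI[of _ "\<lambda>_. a"], rule exI[of _ "\<lambda>_. b"]) simp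

lemma ip_zero: "0 \<in> ideal_prod A B"
  unfolding ideal_prod_def by (rule CollectI, rule exI[of _ 0]) simp

lemma frac_add: "frac_ideal J \<Longrightarrow> a \<in> J \<Longrightarrow> b \<in> J \<Longrightarrow> a + b \<in> J"
  unfolding frac_ideal_def by blast
lemma frac_mult: "frac_ideal J \<Longrightarrow> r \<in> ring_of_integers \<Longrightarrow> a \<in> J \<Longrightarrow> r * a \<in> J"
  unfolding frac_ideal_def by blast
lemma frac_neg: "frac_ideal J \<Longrightarrow> a \<in> J \<Longrightarrow> - a \<in> J"
  using frac_mult[OF _ R_of_int[of "-1"]] by fastforce
lemma frac_diff: "frac_ideal J \<Longrightarrow> a \<in> J \<Longrightarrow> b \<in> J \<Longrightarrow> a - b \<in> J"
  using frac_add[OF _ _ frac_neg] by fastforce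
lemma frac_nz: "frac_ideal J \<Longrightarrow> \<exists>v\<in>J. v \<noteq> 0"
  unfolding frac_ideal_def by blast

lemma nz_Rideal: "nz_ideal I \<Longrightarrow> Rideal I"
  unfolding nz_ideal_def Rideal_def by blast
lemma nz_nz: "nz_ideal I \<Longrightarrow> \<exists>v\<in>I. v \<noteq> 0"
  unfolding nz_ideal_def by blast

lemma ip_mult_I:
  assumes I: "nz_ideal I" and JJ: "ideal_prod J Jh \<subseteq> ring_of_integers"
    and x: "x \<in> J" and s: "s \<in> ideal_prod I Jh"
  shows "x * s \<in> I"
proof -
  have RI: "Rideal I" using nz_Rideal[OF I] .
  have I0: "0 \<in> I" using I unfolding nz_ideal_def by blast
  have "\<exists>(n::nat) a b. (\<forall>i<n. a i \<in> I \<and> b i \<in> Jh) \<and> s = (\<Sum>i<n. a i * b i)"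
    using s unfolding ideal_prod_def by simp
  then obtain n :: nat and a b where ab: "\<forall>i<n. a i \<in> I \<and> b i \<in> Jh" and sd: "s = (\<Sum>i<n. a i * b i)"
    by blast
  have "x * s = (\<Sum>i<n. (x * b i) * a i)" unfolding sd by (simp add: sum_distrib_left algebra_simps)
  also have "\<dots> \<in> I"
  proof (rule Rideal_sum[OF RI I0])
    fix i assume "i \<in> {..<n}"
    then have "a i \<in> I" "b i \<in> Jh" using ab by auto
    then show "(x * b i) * a i \<in> I"
      using ip_single[OF x, of "b i" Jh] JJ by (intro Rideal_mult[OF RI]) auto
  qed simp
  finally show ?thesis .
qed


theorem lemma7p4:
  fixes I J Jh :: "'a::field_char_0 set"
  assumes "number_field TYPE('a)" and "totally_real TYPE('a)"
    and "frac_ideal J" and "frac_ideal Jh"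
    and "ideal_prod J Jh \<subseteq> ring_of_integers"
    and "nz_ideal I"
    and "I \<subseteq> ideal_prod J Jh"
  shows "\<forall>B \<in> Gammabar_reps I J Jh. \<exists>A \<in> Gamma J Jh. red_eq I J Jh A B"
proof
  fix B assume "B \<in> Gammabar_reps I J Jh"
  then obtain b11 b12 b21 b22 where B: "B = (b11, b12, b21, b22)"
    and b11: "b11 \<in> ring_of_integers" and b22: "b22 \<in> ring_of_integers"
    and b12: "b12 \<in> J" and b21: "b21 \<in> Jh" and det: "b11 * b22 - b12 * b21 - 1 \<in> I"
    unfolding Gammabar_reps_def by auto
  have J: "frac_ideal J" and Jh: "frac_ideal Jh" and JJ: "ideal_prod J Jh \<subseteq> ring_of_integers"
    and I: "nz_ideal I" using assms by auto
  have RI: "Rideal I" using nz_Rideal[OF I] .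
  have I0: "0 \<in> I" using I unfolding nz_ideal_def by blast
  have IR: "\<And>x. x \<in> I \<Longrightarrow> x \<in> ring_of_integers" using I unfolding nz_ideal_def by blast
  have prodR: "\<And>v h. v \<in> J \<Longrightarrow> h \<in> Jh \<Longrightarrow> v * h \<in> ring_of_integers"
    using ip_single JJ by blast
  obtain c where c: "c \<in> Jh" "c \<noteq> 0" "c - b21 \<in> ideal_prod I Jh"
  proof (cases "b21 = 0")
    case False then show ?thesis using that[of b21] b21 ip_zero[of I Jh] by simp
  next
    case True
    obtain i1 where i1: "i1 \<in> I" "i1 \<noteq> 0" using nz_nz[OF I] by blast
    obtain h1 where h1: "h1 \<in> Jh" "h1 \<noteq> 0" using frac_nz[OF Jh] by blast
    show ?thesis
      using that[of "i1 * h1"] frac_mult[OF Jh IR[OF i1(1)] h1(1)] i1 h1 ip_single[OF i1(1) h1(1)] True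
      by simp
  qed
  define \<delta> where "\<delta> = b11 * b22 - c * b12 - 1"
  have \<delta>I: "\<delta> \<in> I"
  proof -
    have "b12 * (c - b21) \<in> I" by (rule ip_mult_I[OF I JJ b12 c(3)])
    then have "(b11 * b22 - b12 * b21 - 1) - b12 * (c - b21) \<in> I" using Rideal_diff[OF RI det] by blast
    moreover have "(b11 * b22 - b12 * b21 - 1) - b12 * (c - b21) = \<delta>" unfolding \<delta>_def by (simp add: algebra_simps)
    ultimately show ?thesis by simp
  qed
  have \<delta>R: "\<delta> \<in> ring_of_integers" using IR[OF \<delta>I] .
  define K where "K = (\<lambda>v. c * v) ` J"
  have RK: "Rideal K" unfolding Rideal_def
  proof (intro conjI ballI)
    show "K \<subseteq> ring_of_integers" unfolding K_def using prodR c(1) by (auto simp: mult.commute)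
  next
    fix a b assume "a \<in> K" "b \<in> K"
    then obtain v1 v2 where "v1 \<in> J" "v2 \<in> J" "a = c * v1" "b = c * v2" unfolding K_def by auto
    then show "a + b \<in> K" unfolding K_def using frac_add[OF J]
      by (auto simp: distrib_left intro!: image_eqI[of _ _ "v1 + v2"])
  next
    fix r a :: 'a assume "r \<in> ring_of_integers" "a \<in> K"
    then obtain v1 where "v1 \<in> J" "a = c * v1" unfolding K_def by auto
    moreover have "r * v1 \<in> J" using frac_mult[OF J \<open>r \<in> ring_of_integers\<close>] \<open>v1 \<in> J\<close> by blast
    ultimately show "r * a \<in> K" unfolding K_def
      by (auto simp: algebra_simps intro!: image_eqI[of _ _ "r * v1"])
  qed
  obtain v0 where v0: "v0 \<in> J" "v0 \<noteq> 0" using frac_nz[OF J] by blast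
  have zK: "c * v0 \<in> K" "c * v0 \<noteq> 0" unfolding K_def using v0 c(2) by auto
  have "b11 * b22 + (- \<delta>) - 1 \<in> K"
  proof -
    have "b11 * b22 + (- \<delta>) - 1 = c * b12" unfolding \<delta>_def by simp
    then show ?thesis unfolding K_def using b12 by auto
  qed
  from stable_range[OF RK zK b11 b22 R_neg[OF \<delta>R] this]
  obtain t u where t: "t \<in> ring_of_integers" and u: "u \<in> ring_of_integers"
    and tu: "(b11 + t * (- \<delta>)) * u - 1 \<in> K" by blast
  define a11 where "a11 = b11 - t * \<delta>"
  obtain v where v: "v \<in> J" and av: "a11 * u - 1 = c * v"
    using tu unfolding K_def a11_def by auto
  have av': "a11 * u = c * v + 1" using av by (simp add: diff_eq_eq)
  have a11R: "a11 \<in> ring_of_integers" unfolding a11_def using b11 t \<delta>R by (intro R_intros)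
  \<comment> \<open>step 3: complete the first column\<close>
  define s where "s = u * b12 - v * b22"
  have s: "s \<in> J" unfolding s_def
    using frac_diff[OF J frac_mult[OF J u b12]] frac_mult[OF J b22 v] by (simp add: mult.commute)
  define d' where "d' = a11 * b22 - c * b12"
  have d'I: "d' - 1 \<in> I"
  proof -
    have "d' - 1 = \<delta> + (- t * b22) * \<delta>" unfolding d'_def a11_def \<delta>_def by (simp add: algebra_simps)
    moreover have "(- t * b22) * \<delta> \<in> I" using t b22 by (intro Rideal_mult[OF RI _ \<delta>I] R_intros)
    ultimately show ?thesis using Rideal_add[OF RI \<delta>I] by metis
  qed
  define a12 where "a12 = a11 * s + v"
  define a22 where "a22 = c * s + u"
  have a12J: "a12 \<in> J" unfolding a12_def using frac_add[OF J frac_mult[OF J a11R s] v] .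
  have a22R: "a22 \<in> ring_of_integers" unfolding a22_def
    using R_closed(1)[OF prodR[OF s c(1)] u] by (simp add: mult.commute)
  have detA: "a11 * a22 - a12 * c = 1"
  proof -
    have "a11 * a22 - a12 * c = a11 * u - c * v" unfolding a22_def a12_def by (simp add: algebra_simps)
    then show ?thesis using av' by simp
  qed
  have e12: "a12 - b12 = (d' - 1) * (- v)"
  proof -
    have "a12 - b12 - (d' - 1) * (- v) = b12 * ((a11 * u - 1) - c * v)"
      unfolding a12_def s_def d'_def by (simp add: algebra_simps)
    then show ?thesis using av by (simp add: eq_neg_iff_add_eq_0)
  qed
  have e22: "a22 - b22 = (d' - 1) * (- u)"
  proof -
    have "a22 - b22 - (d' - 1) * (- u) = b22 * ((a11 * u - 1) - c * v)"
      unfolding a22_def s_def d'_def by (simp add: algebra_simps)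
    then show ?thesis using av by (simp add: eq_neg_iff_add_eq_0)
  qed
  show "\<exists>A \<in> Gamma J Jh. red_eq I J Jh A B"
  proof (rule bexI[of _ "(a11, a12, c, a22)"])
    show "(a11, a12, c, a22) \<in> Gamma J Jh"
      unfolding Gamma_def using a11R a22R a12J c(1) detA by (simp add: mult.commute)
    have r11: "a11 - b11 \<in> I"
    proof -
      have "a11 - b11 = (- t) * \<delta>" unfolding a11_def by simp
      then show ?thesis using Rideal_mult[OF RI R_neg[OF t] \<delta>I] by simp
    qed
    have r12: "a12 - b12 \<in> ideal_prod I J" unfolding e12 using ip_single[OF d'I frac_neg[OF J v]] .
    have r22: "a22 - b22 \<in> I" unfolding e22 using Rideal_mult2[OF RI R_neg[OF u] d'I] .
    show "red_eq I J Jh (a11, a12, c, a22) B"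
      unfolding red_eq_def B using r11 r12 r22 c(3) by simp
  qed
qed
end
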